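(* Let the hypotheses of the existence theorem hold (Assumption (A), $q\in[0,1)$, $l\ge0$, $S_H>0$, positive epidemiological parameters, $\hat R_e h(p(0),q)>1$), let $n=1$, $k>0$, and suppose system (O) has an equilibrium $(I_H^*,I_M^*,J^* )$ with $I_H^*>0$. Let $\delta:=-f'(I_H^* )\hat R_eI_H^*$ (so $\delta>0$). Then the eigenvalues of the Jacobian at this equilibrium are the roots of $$\lambda^3+(\gamma+\mu+k)\lambda^2+k(\gamma+\mu+\gamma\delta)\lambda+2\mu k\gamma\delta=0,$$ and: (i) the equilibrium is locally asymptotically stable if and only if $k>-\dfrac{\gamma\delta(\gamma-\mu)+(\gamma+\mu)^2}{\gamma+\mu+\gamma\delta}$; (ii) if equality holds, the cubic has exactly one negative real root and two nonzero purely imaginary complex-conjugate roots; (iii) if the reverse strict inequality holds, the equilibrium is unstable and the cubic has exactly one negative real root and two complex-conjugate roots with positive real part.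
   Context: Assumption (A): $a,w:[0,\infty)\to(0,\infty)$ are continuously differentiable with $a'(x)>0$ and $w'(x)\le0$ for all $x\ge0$. Let $c(p,q):=1-p(1-q)$, $p(x):=a(x)/(a(x)+w(x))$, $h(p,q):=c(p,q)/(c(p,q)+l)$, $f(x):=h(p(x),q)$, and $\hat R_e:=\sqrt{\frac{\beta_{H\leftarrow M}\beta_{M\leftarrow H}}{\gamma\mu}\rho S_H}$. For $n=1$, system (O) is, with $S_H>0$ fixed, $$\dot I_H=\beta_{H\leftarrow M}\rho S_H f(J)I_M-\gamma I_H,\qquad \dot I_M=\beta_{M\leftarrow H}f(J)I_H-\mu I_M,\qquad \dot J=kI_H-kJ.$$ *)

theory Defs
  imports "HOL-Analysis.Analysis"
begin

definition c_fun :: "real \<Rightarrow> real \<Rightarrow> real" where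
  "c_fun p q = 1 - p * (1 - q)"

definition h_fun :: "real \<Rightarrow> real \<Rightarrow> real \<Rightarrow> real" where
  "h_fun l p q = c_fun p q / (c_fun p q + l)"

definition p_fun :: "(real \<Rightarrow> real) \<Rightarrow> (real \<Rightarrow> real) \<Rightarrow> real \<Rightarrow> real" where
  "p_fun a w x = a x / (a x + w x)"

definition f_fun :: "(real \<Rightarrow> real) \<Rightarrow> (real \<Rightarrow> real) \<Rightarrow> real \<Rightarrow> real \<Rightarrow> real \<Rightarrow> real" where
  "f_fun a w q l x = h_fun l (p_fun a w x) q"

definition Rhat_e :: "real \<Rightarrow> real \<Rightarrow> real \<Rightarrow> real \<Rightarrow> real \<Rightarrow> real \<Rightarrow> real" where
  "Rhat_e bHM bMH \<gamma> \<mu> \<rho> SH = sqrt (bHM * bMH / (\<gamma> * \<mu>) * \<rho> * SH)"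

text \<open>Vector field of system (O) for n = 1; state X = (I_H, I_M, J).\<close>

definition fieldO :: "(real \<Rightarrow> real) \<Rightarrow> real \<Rightarrow> real \<Rightarrow> real \<Rightarrow> real \<Rightarrow> real
      \<Rightarrow> real \<Rightarrow> real \<Rightarrow> real^3 \<Rightarrow> real^3" where
  "fieldO f bHM bMH \<rho> SH \<gamma> \<mu> k X =
     vector [bHM * \<rho> * SH * f (X$3) * X$2 - \<gamma> * X$1,
             bMH * f (X$3) * X$1 - \<mu> * X$2,
             k * X$1 - k * X$3]"

definition jacobian_at :: "(real^3 \<Rightarrow> real^3) \<Rightarrow> real^3 \<Rightarrow> real^3^3" where
  "jacobian_at F X = matrix (frechet_derivative F (at X))"

definition is_eigenvalue :: "real^3^3 \<Rightarrow> complex \<Rightarrow> bool" where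
  "is_eigenvalue A z \<longleftrightarrow>
     (\<exists>v::complex^3. v \<noteq> 0 \<and> (\<chi> i j. complex_of_real (A$i$j)) *v v = z *s v)"

definition lin_asympt_stable :: "real^3^3 \<Rightarrow> bool" where
  "lin_asympt_stable A \<longleftrightarrow> (\<forall>z. is_eigenvalue A z \<longrightarrow> Re z < 0)"

definition lin_unstable :: "real^3^3 \<Rightarrow> bool" where
  "lin_unstable A \<longleftrightarrow> (\<exists>z. is_eigenvalue A z \<and> Re z > 0)"

end

theory Submission
  imports Defs
begin


lemma cubic_neg_root:
  fixes a2 a1 a0 :: real
  assumes "a2 > 0" "a1 > 0" "a0 > 0"
  shows "\<exists>r<0. r^3 + a2*r^2 + a1*r + a0 = 0"
proof -
  define M where "M = 1 + a2 + a0"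
  have M1: "M \<ge> 1" using assms by (simp add: M_def)
  have "a0 \<le> a0 * M^2" using assms M1
    by (metis mult_le_cancel_left1 one_le_power order.strict_iff_not)
  moreover have "a1 * M > 0" using assms M1 by simp
  moreover have "M^3 = M^2 * (1 + a2 + a0)" by (simp add: M_def power3_eq_cube power2_eq_square)
  moreover have "M^2 > 0" using M1 by simp
  moreover have "(-M)^3 + a2*(-M)^2 + a1*(-M) + a0 = -(M^2) - (a0*M^2 - a0) - a1*M"
    using \<open>M^3 = M^2 * (1 + a2 + a0)\<close> by (simp add: algebra_simps)
  ultimately have neg: "(-M)^3 + a2*(-M)^2 + a1*(-M) + a0 \<le> 0"
    by linarith
  have "\<exists>x. -M \<le> x \<and> x \<le> 0 \<and> x^3 + a2*x^2 + a1*x + a0 = 0"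
    by (rule IVT') (use neg assms M1 in \<open>auto intro!: continuous_intros\<close>)
  then obtain x where x: "x \<le> 0" "x^3 + a2*x^2 + a1*x + a0 = 0" by blast
  with assms have "x \<noteq> 0" by auto
  with x show ?thesis by (intro exI[of _ x]) auto
qed

lemma quad_re_neg:
  fixes b c :: real and z :: complex
  assumes "b > 0" "c > 0" "z^2 + of_real b * z + of_real c = 0"
  shows "Re z < 0"
proof -
  have e1: "(Re z)^2 - (Im z)^2 + b * Re z + c = 0"
    using arg_cong[OF assms(3), of Re] by (simp add: power2_eq_square)
  have e2: "Im z * (2 * Re z + b) = 0"
    using arg_cong[OF assms(3), of Im] by (simp add: power2_eq_square algebra_simps)
  show ?thesis
  proof (cases "Im z = 0")
    case True
    show ?thesis
    proof (rule ccontr)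
      assume "\<not> Re z < 0"
      then have "Re z \<ge> 0" by simp
      then have "(Re z)^2 + b * Re z + c > 0" using assms
        by (simp add: add_nonneg_pos)
      with e1 True show False by simp
    qed
  next
    case False
    with e2 have "2 * Re z + b = 0" by simp
    with assms show ?thesis by simp
  qed
qed

lemma cubic_analysis:
  fixes a2 a1 a0 :: real
  assumes pos: "a2 > 0" "a1 > 0" "a0 > 0"
  defines "P \<equiv> (\<lambda>z::complex. z ^ 3 + of_real a2 * z ^ 2 + of_real a1 * z + of_real a0)"
  shows "(a2 * a1 > a0 \<longrightarrow> (\<forall>z. P z = 0 \<longrightarrow> Re z < 0))
    \<and> (a2 * a1 = a0 \<longrightarrow> (\<exists>r \<omega>. r < 0 \<and> \<omega> > 0 \<and>
              {z. P z = 0} = {complex_of_real r, \<i> * of_real \<omega>, - \<i> * of_real \<omega>}))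
    \<and> (a2 * a1 < a0 \<longrightarrow> (\<exists>r \<alpha> \<beta>. r < 0 \<and> \<alpha> > 0 \<and> \<beta> > 0 \<and>
              {z. P z = 0} = {complex_of_real r, Complex \<alpha> \<beta>, Complex \<alpha> (- \<beta>)}))"
proof -
  obtain r where r: "r < 0" "r^3 + a2*r^2 + a1*r + a0 = 0"
    using cubic_neg_root[OF pos] by blast
  define b where "b = a2 + r"
  define c where "c = - a0 / r"
  have c: "c > 0" using r pos by (simp add: c_def divide_pos_neg)
  have ha0: "a0 = - (r * c)" using r by (simp add: c_def)
  have ha2: "a2 = b - r" by (simp add: b_def)
  have ha1: "a1 = c - r * b"
  proof -
    have cr: "c * r = - a0" using r(1) by (simp add: c_def)
    have "(c - r*b)*r = c*r - (a2*r^2 + r^3)" by (simp add: b_def algebra_simps power2_eq_square power3_eq_cube)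
    also have "\<dots> = a1 * r" using cr r(2) by linarith
    finally have "(c - r*b)*r = a1 * r" .
    then show ?thesis using r(1) by simp
  qed
  have fac: "P z = (z - of_real r) * (z^2 + of_real b * z + of_real c)" for z
    unfolding P_def ha0 ha1 ha2
    by (simp add: algebra_simps power2_eq_square power3_eq_cube)
  have facr: "x^3 + a2*x^2 + a1*x + a0 = (x - r) * (x^2 + b * x + c)" for x
    unfolding ha0 ha1 ha2
    by (simp add: algebra_simps power2_eq_square power3_eq_cube)
  have D: "a2 * a1 - a0 = b * (a1 + r^2)"
    unfolding ha0 ha1 ha2 by (simp add: algebra_simps power2_eq_square)
  have a1r: "a1 + r^2 > 0" using pos by (simp add: add_pos_nonneg)
  have Dsign: "(a2 * a1 > a0 \<longleftrightarrow> b > 0) \<and> (a2 * a1 = a0 \<longleftrightarrow> b = 0) \<and> (a2 * a1 < a0 \<longleftrightarrow> b < 0)"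
  proof -
    have "a2 * a1 - a0 > 0 \<longleftrightarrow> b > 0" using D a1r zero_less_mult_pos2 by (metis mult_pos_pos)
    moreover have "a2 * a1 - a0 < 0 \<longleftrightarrow> b < 0" using D a1r
      by (metis mult_less_0_iff not_less_iff_gr_or_eq)
    ultimately show ?thesis by auto
  qed
  have part1: "a2 * a1 > a0 \<longrightarrow> (\<forall>z. P z = 0 \<longrightarrow> Re z < 0)"
  proof (intro impI allI)
    fix z assume "a2 * a1 > a0" "P z = 0"
    then have b: "b > 0" using Dsign by simp
    from \<open>P z = 0\<close> fac have "z = of_real r \<or> z^2 + of_real b * z + of_real c = 0" by simp
    then show "Re z < 0" using quad_re_neg[OF b c] r by auto
  qed
  have part2: "a2 * a1 = a0 \<longrightarrow> (\<exists>r \<omega>. r < 0 \<and> \<omega> > 0 \<and>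
              {z. P z = 0} = {complex_of_real r, \<i> * of_real \<omega>, - \<i> * of_real \<omega>})"
  proof
    assume "a2 * a1 = a0"
    then have b: "b = 0" using Dsign by simp
    define \<omega> where "\<omega> = sqrt c"
    have w: "\<omega> > 0" using c by (simp add: \<omega>_def)
    have w2: "complex_of_real c = of_real \<omega> ^ 2" using c by (simp add: \<omega>_def flip: of_real_power)
    have "P z = (z - of_real r) * ((z - \<i> * of_real \<omega>) * (z - (- \<i> * of_real \<omega>)))" for z
      unfolding fac b w2 by (simp add: algebra_simps power2_eq_square)
    then have "{z. P z = 0} = {complex_of_real r, \<i> * of_real \<omega>, - \<i> * of_real \<omega>}" by (auto simp: eq_neg_iff_add_eq_0)
    then show "\<exists>r \<omega>. r < 0 \<and> \<omega> > 0 \<and>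
              {z. P z = 0} = {complex_of_real r, \<i> * of_real \<omega>, - \<i> * of_real \<omega>}"
      using r w by blast
  qed
  have part3: "a2 * a1 < a0 \<longrightarrow> (\<exists>r \<alpha> \<beta>. r < 0 \<and> \<alpha> > 0 \<and> \<beta> > 0 \<and>
              {z. P z = 0} = {complex_of_real r, Complex \<alpha> \<beta>, Complex \<alpha> (- \<beta>)})"
  proof
    assume "a2 * a1 < a0"
    then have b: "b < 0" using Dsign by simp
    have disc: "b^2 < 4 * c"
    proof (rule ccontr)
      assume "\<not> b^2 < 4 * c"
      then have ge: "b^2 - 4*c \<ge> 0" by simp
      define s where "s = sqrt (b^2 - 4*c)"
      have s2: "s^2 = b^2 - 4*c" using ge by (simp add: s_def)
      have s0: "s \<ge> 0" using ge by (simp add: s_def)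
      define x where "x = (- b + s) / 2"
      have x: "x > 0" using b s0 by (simp add: x_def)
      have "x^2 + b * x + c = 0" unfolding x_def using s2
        by (simp add: field_simps power2_eq_square)
      then have "x^3 + a2*x^2 + a1*x + a0 = 0" using facr by simp
      moreover have "x^3 + a2*x^2 + a1*x + a0 > 0" using x pos
        by (simp add: add_pos_pos)
      ultimately show False by simp
    qed
    define \<alpha> where "\<alpha> = - b / 2"
    define \<beta> where "\<beta> = sqrt (4 * c - b^2) / 2"
    have al: "\<alpha> > 0" using b by (simp add: \<alpha>_def)
    have be: "\<beta> > 0" using disc by (simp add: \<beta>_def)
    have be2: "\<beta>^2 = (4 * c - b^2) / 4" using disc
      by (simp add: \<beta>_def power_divide)
    have cb: "complex_of_real c = of_real \<alpha> ^ 2 + of_real \<beta> ^ 2"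
    proof -
      have "c = \<alpha>^2 + \<beta>^2" using be2 by (simp add: \<alpha>_def power2_eq_square field_simps)
      then show ?thesis by (metis of_real_add of_real_power)
    qed
    have bb: "complex_of_real b = - 2 * of_real \<alpha>" by (simp add: \<alpha>_def)
    have "P z = (z - of_real r) * ((z - Complex \<alpha> \<beta>) * (z - Complex \<alpha> (- \<beta>)))" for z
      unfolding fac cb bb Complex_eq by (simp add: algebra_simps power2_eq_square)
    then have "{z. P z = 0} = {complex_of_real r, Complex \<alpha> \<beta>, Complex \<alpha> (- \<beta>)}" by auto
    then show "\<exists>r \<alpha> \<beta>. r < 0 \<and> \<alpha> > 0 \<and> \<beta> > 0 \<and>
              {z. P z = 0} = {complex_of_real r, Complex \<alpha> \<beta>, Complex \<alpha> (- \<beta>)}"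
      using r al be by blast
  qed
  show ?thesis using part1 part2 part3 by blast
qed


lemma vec3_decomp: "(vector [x,y,z] :: real^3) = x *\<^sub>R axis 1 1 + y *\<^sub>R axis 2 1 + z *\<^sub>R axis 3 1"
  by (simp add: vec_eq_iff forall_3 axis_def)

lemma nth_deriv: "((\<lambda>X::real^3. X $ i) has_derivative (\<lambda>h. h $ i)) F"
  using bounded_linear_imp_has_derivative[OF bounded_linear_vec_nth] .

lemma mat_mult_vec: "(mat z :: complex^3^3) *v v = z *s v"
  by (simp add: vec_eq_iff matrix_vector_mult_def mat_def forall_3 sum_3)

lemma eig_det:
  fixes M :: "complex^3^3"
  shows "(\<exists>v. v \<noteq> 0 \<and> M *v v = 0) \<longleftrightarrow> det M = 0"
proof -
  have lin: "Vector_Spaces.linear (*s) (*s) ((*v) M)" by (simp add: matrix_vector_mul_linear_gen)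
  have "det M \<noteq> 0 \<longleftrightarrow> inj ((*v) M)" using det_nz_iff_inj_gen[OF lin] by simp
  moreover have "inj ((*v) M) \<longleftrightarrow> (\<forall>v. M *v v = 0 \<longrightarrow> v = 0)"
    by (rule vec.inj_iff_eq_0)
  ultimately show ?thesis by blast
qed

lemma eig_poly:
  fixes g m k s1 s2 t1 t2 d :: real and z :: complex
  assumes "s1 * s2 = g*m" "t1 = -(g*d)" "s1 * t2 = -(g*m*d)"
  shows "is_eigenvalue (vector [vector [-g, s1, t1], vector [s2, -m, t2], vector [k, 0, -k]]) z
     \<longleftrightarrow> z ^ 3 + of_real (g + m + k) * z ^ 2
                + of_real (k * (g + m + g * d)) * z + of_real (2 * m * k * g * d) = 0"
proof -
  define A :: "real^3^3" where "A = vector [vector [-g, s1, t1], vector [s2, -m, t2], vector [k, 0, -k]]"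
  define Ac where "Ac = (\<chi> i j. complex_of_real (A$i$j))"
  have "is_eigenvalue A z \<longleftrightarrow> (\<exists>v. v \<noteq> 0 \<and> (Ac - mat z) *v v = 0)"
    unfolding is_eigenvalue_def Ac_def matrix_vector_mult_diff_rdistrib mat_mult_vec by simp
  also have "\<dots> \<longleftrightarrow> det (Ac - mat z) = 0" by (rule eig_det)
  also have "det (Ac - mat z) = - (z ^ 3 + of_real (g + m + k) * z ^ 2
                + of_real (k * (g + m + g * d)) * z + of_real (2 * m * k * g * d))"
  proof -
    have r1: "complex_of_real s1 * of_real s2 = of_real g * of_real m"
      using assms(1) by (metis of_real_mult)
    have r2: "complex_of_real t1 = - (of_real g * of_real d)"
      using assms(2) by simp
    have r3: "complex_of_real s1 * of_real t2 = - (of_real g * of_real m * of_real d)"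
      using assms(3) by (metis of_real_mult of_real_minus)
    show ?thesis
      unfolding det_3 Ac_def A_def using r1 r2 r3
      by (simp add: mat_def) (simp add: algebra_simps power2_eq_square power3_eq_cube)
  qed
  finally have "is_eigenvalue A z \<longleftrightarrow> - (z ^ 3 + of_real (g + m + k) * z ^ 2
                + of_real (k * (g + m + g * d)) * z + of_real (2 * m * k * g * d)) = 0" .
  then show ?thesis unfolding A_def by (simp only: neg_equal_0_iff_equal)
qed



lemma aux_eq:
  fixes l q N N2 D C :: real
  assumes "N2 = N"
  shows "l * (-(1-q) * (N/D^2)) / (C+l)^2 = ((0 - N2/(D*D)*(1-q))*(C+l) - C*((0 - N2/(D*D)*(1-q)) + 0))/((C+l)*(C+l))"
proof -
  define E where "E = N/(D*D)*(1-q)"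
  have h1: "((0 - N2/(D*D)*(1-q))*(C+l) - C*((0 - N2/(D*D)*(1-q)) + 0)) = -(E*l)"
    unfolding assms E_def[symmetric] by (simp add: algebra_simps)
  have gen: "\<And>G. l * (-(1-q) * G) = -(G*(1-q)*l)" by (simp add: algebra_simps)
  have h2: "l * (-(1-q) * (N/D^2)) = -(E*l)" unfolding E_def power2_eq_square by (rule gen)
  show ?thesis unfolding h1 h2 by (simp only: power2_eq_square)
qed

lemma f_deriv:
  assumes ad: "(a has_real_derivative a'x) (at x)" and wd: "(w has_real_derivative w'x) (at x)"
    and pos: "a x > 0" "w x > 0" and q: "0 \<le> q" "q < 1" and l: "l \<ge> 0"
  shows "(f_fun a w q l has_real_derivative
     (l * (-(1-q) * ((a'x * w x - a x * w'x)/(a x + w x)^2)) / (c_fun (p_fun a w x) q + l)^2)) (at x)"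
proof -
  have feq: "f_fun a w q l = (\<lambda>x. (1 - a x / (a x + w x) * (1 - q)) / ((1 - a x / (a x + w x) * (1 - q)) + l))"
    by (rule ext) (simp add: f_fun_def h_fun_def c_fun_def p_fun_def)
  have p01: "a x / (a x + w x) < 1" using pos by simp
  have cpos: "1 - a x / (a x + w x) * (1 - q) > 0"
  proof -
    have "a x / (a x + w x) * (1 - q) \<le> a x / (a x + w x)"
      using q pos by (intro mult_left_le) auto
    then show ?thesis using p01 by simp
  qed
  have nz1: "a x + w x \<noteq> 0" using pos by simp
  have nz2: "1 - a x / (a x + w x) * (1 - q) + l \<noteq> 0" using cpos l by simp
  define p where "p = (\<lambda>x. a x / (a x + w x))"
  have dp: "(p has_real_derivative (a'x * (a x + w x) - a x * (a'x + w'x)) / ((a x + w x) * (a x + w x))) (at x)"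
    unfolding p_def by (intro DERIV_divide ad DERIV_add wd nz1)
  define cc where "cc = (\<lambda>x. 1 - p x * (1 - q))"
  have dc: "(cc has_real_derivative (0 - (a'x * (a x + w x) - a x * (a'x + w'x)) / ((a x + w x) * (a x + w x)) * (1 - q))) (at x)"
    unfolding cc_def by (intro DERIV_diff DERIV_const DERIV_cmult_right dp)
  have ccx: "cc x + l \<noteq> 0" using nz2 by (simp add: cc_def p_def)
  have dh: "((\<lambda>x. cc x / (cc x + l)) has_real_derivative
     ((0 - (a'x * (a x + w x) - a x * (a'x + w'x)) / ((a x + w x) * (a x + w x)) * (1 - q)) * (cc x + l) - cc x * ((0 - (a'x * (a x + w x) - a x * (a'x + w'x)) / ((a x + w x) * (a x + w x)) * (1 - q)) + 0)) / ((cc x + l) * (cc x + l))) (at x)"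
    by (intro DERIV_divide dc DERIV_add DERIV_const ccx)
  have "f_fun a w q l = (\<lambda>x. cc x / (cc x + l))" unfolding feq cc_def p_def ..
  moreover have "(l * (-(1-q) * ((a'x * w x - a x * w'x)/(a x + w x)^2)) / (c_fun (p_fun a w x) q + l)^2) = 
     ((0 - (a'x * (a x + w x) - a x * (a'x + w'x)) / ((a x + w x) * (a x + w x)) * (1 - q)) * (cc x + l) - cc x * ((0 - (a'x * (a x + w x) - a x * (a'x + w'x)) / ((a x + w x) * (a x + w x)) * (1 - q)) + 0)) / ((cc x + l) * (cc x + l))"
  proof -
    have "c_fun (p_fun a w x) q = cc x" by (simp add: cc_def p_def c_fun_def p_fun_def)
    moreover have "(a'x * (a x + w x) - a x * (a'x + w'x)) = a'x * w x - a x * w'x" by (simp add: algebra_simps)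
    ultimately show ?thesis by (simp only: aux_eq)
  qed
  ultimately show ?thesis using dh by simp
qed

theorem mainTheorem14:
  fixes a w a' w' :: "real \<Rightarrow> real"
    and q l SH bHM bMH \<rho> \<gamma> \<mu> k IH IM J :: real
  assumes a_deriv: "\<And>x. x \<ge> 0 \<Longrightarrow> (a has_real_derivative a' x) (at x within {0..})"
    and w_deriv: "\<And>x. x \<ge> 0 \<Longrightarrow> (w has_real_derivative w' x) (at x within {0..})"
    and a'_cont: "continuous_on {0..} a'"
    and w'_cont: "continuous_on {0..} w'"
    and a_pos: "\<And>x. x \<ge> 0 \<Longrightarrow> a x > 0"
    and w_pos: "\<And>x. x \<ge> 0 \<Longrightarrow> w x > 0"
    and a'_pos: "\<And>x. x \<ge> 0 \<Longrightarrow> a' x > 0"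
    and w'_nonpos: "\<And>x. x \<ge> 0 \<Longrightarrow> w' x \<le> 0"
    and q: "0 \<le> q" "q < 1"
    and l: "l \<ge> 0"
    and SH: "SH > 0"
    and params: "bHM > 0" "bMH > 0" "\<rho> > 0" "\<gamma> > 0" "\<mu> > 0"
    and R0: "Rhat_e bHM bMH \<gamma> \<mu> \<rho> SH * h_fun l (p_fun a w 0) q > 1"
    and k: "k > 0"
    and equil: "fieldO (f_fun a w q l) bHM bMH \<rho> SH \<gamma> \<mu> k (vector [IH, IM, J]) = 0"
    and IH_pos: "IH > 0"
  shows
    "let f = f_fun a w q l;
         R = Rhat_e bHM bMH \<gamma> \<mu> \<rho> SH;
         \<delta> = - deriv f IH * R * IH;
         A = jacobian_at (fieldO f bHM bMH \<rho> SH \<gamma> \<mu> k) (vector [IH, IM, J]);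
         P = (\<lambda>z::complex. z ^ 3 + of_real (\<gamma> + \<mu> + k) * z ^ 2
                + of_real (k * (\<gamma> + \<mu> + \<gamma> * \<delta>)) * z + of_real (2 * \<mu> * k * \<gamma> * \<delta>));
         kc = - (\<gamma> * \<delta> * (\<gamma> - \<mu>) + (\<gamma> + \<mu>)\<^sup>2) / (\<gamma> + \<mu> + \<gamma> * \<delta>)
     in \<delta> > 0
      \<and> (\<forall>z. is_eigenvalue A z \<longleftrightarrow> P z = 0)
      \<and> (lin_asympt_stable A \<longleftrightarrow> k > kc)
      \<and> (k = kc \<longrightarrow> (\<exists>r \<omega>. r < 0 \<and> \<omega> > 0 \<and>
              {z. P z = 0} = {complex_of_real r, \<i> * of_real \<omega>, - \<i> * of_real \<omega>}))
      \<and> (k < kc \<longrightarrow> lin_unstable A \<and> (\<exists>r \<alpha> \<beta>. r < 0 \<and> \<alpha> > 0 \<and> \<beta> > 0 \<and>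
              {z. P z = 0} = {complex_of_real r, Complex \<alpha> \<beta>, Complex \<alpha> (- \<beta>)}))"
  proof -
  define f where "f = f_fun a w q l"
  define R where "R = Rhat_e bHM bMH \<gamma> \<mu> \<rho> SH"
  define X0 :: "real^3" where "X0 = vector [IH, IM, J]"
  have atx: "at x within {0..} = at x" if "x > 0" for x :: real
    using that by (intro at_within_interior) (simp add: interior_real_atLeast)
  have ad: "(a has_real_derivative a' x) (at x)" if "x > 0" for x
    using a_deriv[of x] that atx[OF that] by simp
  have wd: "(w has_real_derivative w' x) (at x)" if "x > 0" for x
    using w_deriv[of x] that atx[OF that] by simp
  have cpos: "c_fun (p_fun a w x) q > 0" if "x \<ge> 0" for x
  proof -
    have p01: "a x / (a x + w x) < 1" using a_pos[OF that] w_pos[OF that] by simp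
    have "a x / (a x + w x) * (1 - q) \<le> a x / (a x + w x)"
      using q a_pos[OF that] w_pos[OF that] by (intro mult_left_le) auto
    then show ?thesis using p01 by (simp add: c_fun_def p_fun_def)
  qed
  have fpos: "f x > 0" if "x \<ge> 0" for x
    using cpos[OF that] l by (simp add: f_def f_fun_def h_fun_def)
  have e1: "bHM * \<rho> * SH * f J * IM - \<gamma> * IH = 0"
    using arg_cong[OF equil, of "\<lambda>v. v $ 1"] by (simp add: fieldO_def f_def)
  have e2: "bMH * f J * IH - \<mu> * IM = 0"
    using arg_cong[OF equil, of "\<lambda>v. v $ 2"] by (simp add: fieldO_def f_def)
  have e3: "k * IH - k * J = 0"
    using arg_cong[OF equil, of "\<lambda>v. v $ 3"] by (simp add: fieldO_def)
  have JI: "J = IH" using e3 k by simp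
  have fJ: "f IH > 0" using fpos IH_pos by simp
  have e1': "bHM * \<rho> * SH * f IH * IM = \<gamma> * IH" using e1 JI by simp
  have e2': "bMH * f IH * IH = \<mu> * IM" using e2 JI by simp
  have IMpos: "IM > 0"
  proof -
    have "0 < bMH * f IH * IH" using params fJ IH_pos by simp
    then have "\<mu> * IM > 0" using e2' by simp
    then show ?thesis using params by (simp add: zero_less_mult_iff)
  qed
  have Rpos: "R > 0" using params SH by (simp add: R_def Rhat_e_def)
  have R2: "R^2 = bHM * bMH / (\<gamma> * \<mu>) * \<rho> * SH"
    using params SH by (simp add: R_def Rhat_e_def)
  have prod: "bHM * \<rho> * SH * bMH * (f IH)^2 = \<gamma> * \<mu>"
  proof -
    have "(bHM * \<rho> * SH * f IH * IM) * (bMH * f IH * IH) = (\<gamma> * IH) * (\<mu> * IM)"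
      using e1' e2' by simp
    then have "(bHM * \<rho> * SH * bMH * (f IH)^2) * (IM * IH) = (\<gamma> * \<mu>) * (IM * IH)"
      by (simp add: power2_eq_square algebra_simps)
    then show ?thesis using IMpos IH_pos by simp
  qed
  have Rf: "R * f IH = 1"
  proof -
    have g: "\<gamma> * \<mu> * R^2 = bHM * \<rho> * SH * bMH" using R2 params by (simp add: field_simps)
    have "\<gamma> * \<mu> * (R * f IH)^2 = (\<gamma> * \<mu> * R^2) * (f IH)^2" by (simp add: power_mult_distrib)
    also have "\<dots> = \<gamma> * \<mu> * 1" unfolding g using prod by simp
    finally have "(R * f IH)^2 = 1" using params by simp
    moreover have "R * f IH > 0" using Rpos fJ by simp
    ultimately show ?thesis by (auto simp: power2_eq_1_iff)
  qed
  have lpos: "l > 0"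
  proof (rule ccontr)
    assume "\<not> l > 0"
    then have l0: "l = 0" using l by simp
    have f1: "f x = 1" if "x \<ge> 0" for x
      using cpos[OF that] l0 by (simp add: f_def f_fun_def h_fun_def)
    have "R = 1" using Rf f1[of IH] IH_pos by simp
    moreover have "h_fun l (p_fun a w 0) q = 1" using cpos[of 0] l0 by (simp add: h_fun_def)
    ultimately show False using R0 by (simp add: R_def)
  qed
  define fd where "fd = l * (-(1-q) * ((a' IH * w IH - a IH * w' IH)/(a IH + w IH)^2)) / (c_fun (p_fun a w IH) q + l)^2"
  have fder: "(f has_real_derivative fd) (at IH)"
    unfolding f_def fd_def
    by (rule f_deriv[OF ad[OF IH_pos] wd[OF IH_pos] a_pos w_pos q l]) (use IH_pos in auto)
  have fdneg: "fd < 0"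
  proof -
    have "a' IH * w IH > 0" using a'_pos[of IH] w_pos[of IH] IH_pos by simp
    moreover have "a IH * w' IH \<le> 0" using a_pos[of IH] w'_nonpos[of IH] IH_pos
      by (simp add: mult_nonneg_nonpos)
    ultimately have "(a' IH * w IH - a IH * w' IH)/(a IH + w IH)^2 > 0"
      using a_pos[of IH] w_pos[of IH] IH_pos by simp
    then have "-(1-q) * ((a' IH * w IH - a IH * w' IH)/(a IH + w IH)^2) < 0"
      using q by (intro mult_neg_pos) simp_all
    then have "l * (-(1-q) * ((a' IH * w IH - a IH * w' IH)/(a IH + w IH)^2)) < 0"
      by (rule mult_pos_neg[OF lpos])
    moreover have "(c_fun (p_fun a w IH) q + l)^2 > 0" using cpos[of IH] IH_pos l by simp
    ultimately show ?thesis unfolding fd_def by (rule divide_neg_pos)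
  qed
  have derivf: "deriv f IH = fd" using fder by (rule DERIV_imp_deriv)
  define d where "d = - deriv f IH * R * IH"
  have dval: "d = - fd * R * IH" by (simp add: d_def derivf)
  have dpos: "d > 0" using fdneg Rpos IH_pos by (simp add: dval mult_neg_pos)
  define s1 where "s1 = bHM * \<rho> * SH * f IH"
  define t1 where "t1 = bHM * \<rho> * SH * fd * IM"
  define s2 where "s2 = bMH * f IH"
  define t2 where "t2 = bMH * fd * IH"
  define Am :: "real^3^3" where "Am = vector [vector [-\<gamma>, s1, t1], vector [s2, -\<mu>, t2], vector [k, 0, -k]]"
  define F where "F = fieldO f bHM bMH \<rho> SH \<gamma> \<mu> k"
  have Fe: "F = (\<lambda>X. (bHM * \<rho> * SH * f (X$3) * X$2 - \<gamma> * X$1) *\<^sub>R axis 1 1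
      + (bMH * f (X$3) * X$1 - \<mu> * X$2) *\<^sub>R axis 2 1 + (k * X$1 - k * X$3) *\<^sub>R axis 3 1)"
    by (rule ext) (simp add: F_def fieldO_def vec3_decomp)
  have X03: "X0 $ 3 = IH" "X0 $ 2 = IM" "X0 $ 1 = IH" by (simp_all add: X0_def JI)
  have fc: "((\<lambda>X::real^3. f (X$3)) has_derivative (\<lambda>h. fd * h$3)) (at X0)"
    using has_derivative_compose[OF nth_deriv[of 3] fder[unfolded has_field_derivative_def, folded X03(1)]] .
  have Fd: "(F has_derivative (\<lambda>h. Am *v h)) (at X0)"
    unfolding Fe
    apply (rule has_derivative_eq_rhs)
     apply (rule has_derivative_add has_derivative_scaleR_left has_derivative_diff has_derivative_mult
        has_derivative_const fc nth_deriv)+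
    apply (rule ext)
    apply (simp add: vec_eq_iff forall_3 Am_def matrix_vector_mult_def sum_3 X03 axis_def s1_def s2_def t1_def t2_def JI)
    done
  have Jac: "jacobian_at F X0 = Am"
    unfolding jacobian_at_def using frechet_derivative_at[OF Fd] by (metis matrix_of_matrix_vector_mul)
  have r1: "s1 * s2 = \<gamma> * \<mu>" using prod by (simp add: s1_def s2_def power2_eq_square algebra_simps)
  have key: "bHM * \<rho> * SH * IM = \<gamma> * R * IH"
  proof -
    have "bHM * \<rho> * SH * IM = bHM * \<rho> * SH * IM * (R * f IH)" using Rf by simp
    also have "\<dots> = (bHM * \<rho> * SH * f IH * IM) * R" by (simp add: algebra_simps)
    also have "\<dots> = \<gamma> * IH * R" using e1' by simp
    finally show ?thesis by (simp add: algebra_simps)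
  qed
  have r2: "t1 = -(\<gamma> * d)"
  proof -
    have "t1 = fd * (bHM * \<rho> * SH * IM)" by (simp add: t1_def algebra_simps)
    also have "\<dots> = fd * (\<gamma> * R * IH)" by (simp only: key)
    also have "\<dots> = -(\<gamma> * d)" by (simp add: dval algebra_simps)
    finally show ?thesis .
  qed
  have r3: "s1 * t2 = -(\<gamma> * \<mu> * d)"
  proof -
    have "s1 * t2 = fd * bHM * \<rho> * SH * (bMH * f IH * IH)" by (simp add: s1_def t2_def algebra_simps)
    also have "\<dots> = fd * bHM * \<rho> * SH * (\<mu> * IM)" by (simp only: e2')
    also have "\<dots> = fd * \<mu> * (bHM * \<rho> * SH * IM)" by (simp add: algebra_simps)
    also have "\<dots> = fd * \<mu> * (\<gamma> * R * IH)" by (simp only: key)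
    also have "\<dots> = -(\<gamma> * \<mu> * d)" by (simp add: dval algebra_simps)
    finally show ?thesis .
  qed
  define P where "P = (\<lambda>z::complex. z ^ 3 + of_real (\<gamma> + \<mu> + k) * z ^ 2
                + of_real (k * (\<gamma> + \<mu> + \<gamma> * d)) * z + of_real (2 * \<mu> * k * \<gamma> * d))"
  have eig: "is_eigenvalue Am z \<longleftrightarrow> P z = 0" for z
    unfolding Am_def P_def by (rule eig_poly[OF r1 r2 r3])
  have a2p: "\<gamma> + \<mu> + k > 0" using params k by simp
  have Ep: "\<gamma> + \<mu> + \<gamma> * d > 0" using params dpos by (simp add: add_pos_pos)
  have a1p: "k * (\<gamma> + \<mu> + \<gamma> * d) > 0" using k Ep by simp
  have a0p: "2 * \<mu> * k * \<gamma> * d > 0" using k params dpos by simp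
  have cub: "((\<gamma> + \<mu> + k) * (k * (\<gamma> + \<mu> + \<gamma> * d)) > 2 * \<mu> * k * \<gamma> * d \<longrightarrow> (\<forall>z. P z = 0 \<longrightarrow> Re z < 0))
    \<and> ((\<gamma> + \<mu> + k) * (k * (\<gamma> + \<mu> + \<gamma> * d)) = 2 * \<mu> * k * \<gamma> * d \<longrightarrow> (\<exists>r \<omega>. r < 0 \<and> \<omega> > 0 \<and>
              {z. P z = 0} = {complex_of_real r, \<i> * of_real \<omega>, - \<i> * of_real \<omega>}))
    \<and> ((\<gamma> + \<mu> + k) * (k * (\<gamma> + \<mu> + \<gamma> * d)) < 2 * \<mu> * k * \<gamma> * d \<longrightarrow> (\<exists>r \<alpha> \<beta>. r < 0 \<and> \<alpha> > 0 \<and> \<beta> > 0 \<and>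
              {z. P z = 0} = {complex_of_real r, Complex \<alpha> \<beta>, Complex \<alpha> (- \<beta>)}))"
    unfolding P_def by (rule cubic_analysis[OF a2p a1p a0p])
  define N where "N = \<gamma> * d * (\<gamma> - \<mu>) + (\<gamma> + \<mu>)\<^sup>2"
  define E where "E = \<gamma> + \<mu> + \<gamma> * d"
  define kc where "kc = - N / E"
  have kcE: "kc * E = - N" using Ep by (simp add: kc_def E_def)
  have D: "(\<gamma> + \<mu> + k) * (k * (\<gamma> + \<mu> + \<gamma> * d)) - 2 * \<mu> * k * \<gamma> * d = k * (k * E - kc * E)"
    unfolding kcE by (simp add: N_def E_def power2_eq_square algebra_simps)
  have Epos: "E > 0" using Ep by (simp add: E_def)
  have c1: "(\<gamma> + \<mu> + k) * (k * (\<gamma> + \<mu> + \<gamma> * d)) > 2 * \<mu> * k * \<gamma> * d \<longleftrightarrow> k > kc"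
  proof -
    have "k * (k * E - kc * E) > 0 \<longleftrightarrow> k > kc" using k Epos
      by (simp add: zero_less_mult_iff algebra_simps flip: left_diff_distrib)
    then show ?thesis using D by linarith
  qed
  have c2: "(\<gamma> + \<mu> + k) * (k * (\<gamma> + \<mu> + \<gamma> * d)) = 2 * \<mu> * k * \<gamma> * d \<longleftrightarrow> k = kc"
  proof -
    have "k * (k * E - kc * E) = 0 \<longleftrightarrow> k = kc" using k Epos
      by (simp flip: left_diff_distrib)
    then show ?thesis using D by linarith
  qed
  have c3: "(\<gamma> + \<mu> + k) * (k * (\<gamma> + \<mu> + \<gamma> * d)) < 2 * \<mu> * k * \<gamma> * d \<longleftrightarrow> k < kc"
    using c1 c2 by linarith
  have stab: "lin_asympt_stable Am \<longleftrightarrow> k > kc"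
  proof
    assume "k > kc"
    then show "lin_asympt_stable Am" using cub c1 eig unfolding lin_asympt_stable_def by blast
  next
    assume st: "lin_asympt_stable Am"
    show "k > kc"
    proof (rule ccontr)
      assume "\<not> k > kc"
      then have "k = kc \<or> k < kc" by linarith
      then show False
      proof
        assume "k = kc"
        then obtain r \<omega> where "\<omega> > 0" "{z. P z = 0} = {complex_of_real r, \<i> * of_real \<omega>, - \<i> * of_real \<omega>}"
          using cub c2 by blast
        then have "P (\<i> * of_real \<omega>) = 0" by blast
        then have "is_eigenvalue Am (\<i> * of_real \<omega>)" using eig by blast
        then show False using st unfolding lin_asympt_stable_def by force
      next
        assume "k < kc"
        then obtain r \<alpha> \<beta> where "\<alpha> > 0" "{z. P z = 0} = {complex_of_real r, Complex \<alpha> \<beta>, Complex \<alpha> (- \<beta>)}"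
          using cub c3 by blast
        then have "P (Complex \<alpha> \<beta>) = 0" by blast
        then have "is_eigenvalue Am (Complex \<alpha> \<beta>)" using eig by blast
        then show False using st \<open>\<alpha> > 0\<close> unfolding lin_asympt_stable_def by force
      qed
    qed
  qed
  have unst: "k < kc \<longrightarrow> lin_unstable Am"
  proof
    assume "k < kc"
    then obtain r \<alpha> \<beta> where "\<alpha> > 0" "{z. P z = 0} = {complex_of_real r, Complex \<alpha> \<beta>, Complex \<alpha> (- \<beta>)}"
      using cub c3 by blast
    then have "P (Complex \<alpha> \<beta>) = 0" by blast
    then have "is_eigenvalue Am (Complex \<alpha> \<beta>)" using eig by blast
    then show "lin_unstable Am" using \<open>\<alpha> > 0\<close> unfolding lin_unstable_def by force
  qed
  have main: "d > 0
      \<and> (\<forall>z. is_eigenvalue Am z \<longleftrightarrow> P z = 0)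
      \<and> (lin_asympt_stable Am \<longleftrightarrow> k > kc)
      \<and> (k = kc \<longrightarrow> (\<exists>r \<omega>. r < 0 \<and> \<omega> > 0 \<and>
              {z. P z = 0} = {complex_of_real r, \<i> * of_real \<omega>, - \<i> * of_real \<omega>}))
      \<and> (k < kc \<longrightarrow> lin_unstable Am \<and> (\<exists>r \<alpha> \<beta>. r < 0 \<and> \<alpha> > 0 \<and> \<beta> > 0 \<and>
              {z. P z = 0} = {complex_of_real r, Complex \<alpha> \<beta>, Complex \<alpha> (- \<beta>)}))"
    using dpos eig stab unst cub c2 c3 by blast
  show ?thesis
    unfolding Let_def f_def[symmetric] R_def[symmetric] d_def[symmetric] F_def[symmetric]
      X0_def[symmetric] Jac
    using main unfolding P_def kc_def N_def E_def by simp
qed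

end
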